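(* Let $\Omega_1,\dots,\Omega_n$ be formal 1-forms such that $(\nu_\Gamma(\Omega_1),\dots,\nu_\Gamma(\Omega_n))$ is the $\mathbb C[[x]]$-basis of values of $\Gamma$ (i.e. the minimal generating set of $\Lambda_\Gamma$ as a $\mathbb C[[x]]$-collection; it has exactly one element in each residue class modulo $n$, namely the minimum of $\Lambda_\Gamma$ in that class). Then $$\hat\Omega^1(\mathbb C^2,0)=\mathbb C[[x]]\,\Omega_1\oplus\cdots\oplus\mathbb C[[x]]\,\Omega_n\oplus\mathcal I_\Gamma .$$
   Context: $\Gamma$ is a singular irreducible germ of holomorphic curve at $0\in\mathbb C^2$ with Puiseux parametrization $\Gamma(t)=(t^n,\sum_{\beta\ge\beta_1}a_{\beta,\Gamma}t^\beta)$, $n\ge2$. $\hat\Omega^1(\mathbb C^2,0)$ denotes the formal 1-forms $a\,dx+b\,dy$, $a,b\in\mathbb C[[x,y]]$, a $\mathbb C[[x]]$-module. For such $\omega$ with $\Gamma^*\omega=h(t)dt$, $\nu_\Gamma(\omega)=\mathrm{ord}_th+1$ ($\infty$ if $h\equiv0$). $\Lambda_\Gamma=\{\nu_\Gamma(\omega)\}\setminus\{\infty\}$ over holomorphic 1-forms $\omega$. A $\mathbb C[[x]]$-collection is $S\subset\mathbb Z_{>0}$ with $S+n\mathbb Z_{\ge0}\subset S$. $\mathcal I_\Gamma=\{\omega\in\hat\Omega^1(\mathbb C^2,0):\Gamma^*\omega\equiv0\}$. *)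

theory Defs
  imports "HOL-Computational_Algebra.Formal_Power_Series" "HOL-Library.Extended_Nat"
begin

text \<open>A formal power series in x,y is represented as an element of
  complex fps fps: a power series in y whose coefficients are power series in x,
  i.e. the coefficient of x^i y^j of F is (F $ j) $ i.
  A formal 1-form a dx + b dy is the pair (a, b).\<close>

type_synonym bseries = "complex fps fps"
type_synonym form1 = "bseries \<times> bseries"

text \<open>The curve Gamma(t) = (t^n, y(t)). Substitution F(t^n, y(t)) (y has zero
  constant term, so each coefficient is a finite sum).\<close>
definition subst_curve :: "nat \<Rightarrow> complex fps \<Rightarrow> bseries \<Rightarrow> complex fps" where
  "subst_curve n y F =
     Abs_fps (\<lambda>k. fps_nth (\<Sum>j\<le>k. fps_compose (fps_nth F j) (fps_X ^ n) * y ^ j) k)"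

definition pullback :: "nat \<Rightarrow> complex fps \<Rightarrow> form1 \<Rightarrow> complex fps" where
  "pullback n y \<omega> =
     subst_curve n y (fst \<omega>) * fps_deriv (fps_X ^ n) + subst_curve n y (snd \<omega>) * fps_deriv y"

definition nu :: "nat \<Rightarrow> complex fps \<Rightarrow> form1 \<Rightarrow> enat" where
  "nu n y \<omega> = (if pullback n y \<omega> = 0 then \<infinity> else enat (subdegree (pullback n y \<omega>) + 1))"

definition holo_series :: "bseries \<Rightarrow> bool" where
  "holo_series F \<longleftrightarrow> (\<exists>C R. \<forall>i j. norm (fps_nth (fps_nth F j) i) \<le> C * R ^ (i + j))"

definition holo_form :: "form1 \<Rightarrow> bool" where
  "holo_form \<omega> \<longleftrightarrow> holo_series (fst \<omega>) \<and> holo_series (snd \<omega>)"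

definition values_set :: "nat \<Rightarrow> complex fps \<Rightarrow> nat set" where
  "values_set n y = {v. \<exists>\<omega>. holo_form \<omega> \<and> nu n y \<omega> = enat v}"

definition values_basis :: "nat \<Rightarrow> complex fps \<Rightarrow> nat set" where
  "values_basis n y = {v \<in> values_set n y.
      \<forall>w \<in> values_set n y. w mod n = v mod n \<longrightarrow> v \<le> w}"

definition ideal_curve :: "nat \<Rightarrow> complex fps \<Rightarrow> form1 set" where
  "ideal_curve n y = {\<omega>. pullback n y \<omega> = 0}"

text \<open>Puiseux parametrization (t^n, sum_{beta >= beta1} a_beta t^beta) of a singular
  irreducible germ: convergent, n >= 2, first exponent beta1 > n not divisible by n,
  and the parametrization is primitive (irreducibility).\<close>
definition puiseux_param :: "nat \<Rightarrow> complex fps \<Rightarrow> bool" where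
  "puiseux_param n y \<longleftrightarrow>
     2 \<le> n \<and>
     (\<exists>C R. \<forall>k. norm (fps_nth y k) \<le> C * R ^ k) \<and>
     (\<exists>\<beta>1. n < \<beta>1 \<and> \<not> n dvd \<beta>1 \<and> fps_nth y \<beta>1 \<noteq> 0 \<and> (\<forall>\<beta><\<beta>1. fps_nth y \<beta> = 0)) \<and>
     (\<forall>d. 1 < d \<longrightarrow> d dvd n \<longrightarrow> (\<exists>k. fps_nth y k \<noteq> 0 \<and> \<not> d dvd k))"

definition form_add :: "form1 \<Rightarrow> form1 \<Rightarrow> form1" where
  "form_add \<omega> \<eta> = (fst \<omega> + fst \<eta>, snd \<omega> + snd \<eta>)"

definition lin_comb :: "nat \<Rightarrow> (nat \<Rightarrow> complex fps) \<Rightarrow> (nat \<Rightarrow> form1) \<Rightarrow> form1" where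
  "lin_comb n f \<Omega> = ((\<Sum>i<n. fps_const (f i) * fst (\<Omega> i)), (\<Sum>i<n. fps_const (f i) * snd (\<Omega> i)))"

end

theory Submission imports Defs begin
unbundle fps_syntax

lemma Xn_compose_nth:
  fixes a :: "complex fps"
  assumes "0 < n"
  shows "(a oo fps_X ^ n) $ k = (if n dvd k then a $ (k div n) else 0)"
proof -
  have "(a oo fps_X ^ n) $ k = (\<Sum>i\<in>{0..k}. (if i = k div n \<and> n dvd k then a $ i else 0))"
    unfolding fps_compose_nth
    by (rule sum.cong) (use assms in \<open>auto simp: power_mult[symmetric] fps_X_power_nth\<close>)
  also have "\<dots> = (if n dvd k then a $ (k div n) else 0)"
    using assms by (auto simp: sum.delta' div_le_dividend)
  finally show ?thesis .
qed

lemma pow_nth_zero: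
  fixes y :: "complex fps"
  assumes "y $ 0 = 0"
  shows "i < j \<Longrightarrow> (y ^ j) $ i = 0"
proof (induction j arbitrary: i)
  case 0 then show ?case by simp
next
  case (Suc j)
  have "(y * y ^ j) $ i = (\<Sum>m=0..i. y $ m * (y ^ j) $ (i - m))" by (rule fps_mult_nth)
  also have "\<dots> = 0"
  proof (rule sum.neutral, intro ballI)
    fix m assume m: "m \<in> {0..i}"
    show "y $ m * (y ^ j) $ (i - m) = 0"
    proof (cases "m = 0")
      case True then show ?thesis using assms by simp
    next
      case False then show ?thesis using Suc m by auto
    qed
  qed
  finally show ?case by simp
qed

lemma mult_pow_nth_zero:
  fixes y A :: "complex fps"
  assumes "y $ 0 = 0" "k < j"
  shows "(A * y ^ j) $ k = 0"
  unfolding fps_mult_nth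
  by (rule sum.neutral) (use assms pow_nth_zero in auto)

lemma subst_nth:
  "subst_curve n y F $ k = (\<Sum>j\<le>k. (F $ j oo fps_X ^ n) * y ^ j) $ k"
  by (simp add: subst_curve_def)

lemma subst_nth_N:
  assumes "y $ 0 = 0" "k \<le> N"
  shows "subst_curve n y F $ k = (\<Sum>j\<le>N. (F $ j oo fps_X ^ n) * y ^ j) $ k"
proof -
  have "(\<Sum>j\<le>N. (F $ j oo fps_X ^ n) * y ^ j) $ k = (\<Sum>j\<le>N. ((F $ j oo fps_X ^ n) * y ^ j) $ k)"
    by (simp add: fps_sum_nth)
  also have "\<dots> = (\<Sum>j\<le>k. ((F $ j oo fps_X ^ n) * y ^ j) $ k)"
    by (rule sum.mono_neutral_right) (use assms mult_pow_nth_zero in auto)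
  also have "\<dots> = subst_curve n y F $ k" by (simp add: subst_nth fps_sum_nth)
  finally show ?thesis by simp
qed

lemma subst_add: "subst_curve n y (F + G) = subst_curve n y F + subst_curve n y G"
  by (rule fps_ext) (simp add: subst_nth fps_compose_add_distrib distrib_right sum.distrib)

lemma subst_zero: "subst_curve n y 0 = 0"
  by (rule fps_ext) (simp add: subst_nth fps_sum_nth)

lemma subst_sum: "finite I \<Longrightarrow> subst_curve n y (sum h I) = (\<Sum>i\<in>I. subst_curve n y (h i))"
  by (induction I rule: finite_induct) (simp_all add: subst_zero subst_add)

lemma subst_const_mult:
  assumes "0 < n" "y $ 0 = 0"
  shows "subst_curve n y (fps_const g * F) = (g oo fps_X ^ n) * subst_curve n y F"
proof (rule fps_ext)
  fix k
  define S where "S = (\<Sum>j\<le>k. (F $ j oo fps_X ^ n) * y ^ j)"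
  have X0: "(fps_X ^ n :: complex fps) $ 0 = 0" using assms by simp
  have "subst_curve n y (fps_const g * F) $ k = (\<Sum>j\<le>k. (g oo fps_X ^ n) * ((F $ j oo fps_X ^ n) * y ^ j)) $ k"
    by (simp add: subst_nth fps_compose_mult_distrib[OF X0] mult.assoc)
  also have "\<dots> = ((g oo fps_X ^ n) * S) $ k" by (simp add: S_def sum_distrib_left)
  also have "\<dots> = ((g oo fps_X ^ n) * subst_curve n y F) $ k"
    unfolding fps_mult_nth
    by (rule sum.cong[OF refl]) (simp add: S_def subst_nth_N[OF assms(2), where N=k])
  finally show "subst_curve n y (fps_const g * F) $ k = ((g oo fps_X ^ n) * subst_curve n y F) $ k" .
qed

lemma pullback_add: "pullback n y (form_add \<omega> \<eta>) = pullback n y \<omega> + pullback n y \<eta>"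
  by (simp add: pullback_def form_add_def subst_add algebra_simps)

lemma pullback_lin:
  assumes "0 < n" "y $ 0 = 0"
  shows "pullback n y (lin_comb m f \<Omega>) = (\<Sum>i<m. (f i oo fps_X ^ n) * pullback n y (\<Omega> i))"
  by (simp add: pullback_def lin_comb_def subst_sum subst_const_mult[OF assms]
        sum_distrib_right distrib_left sum.distrib mult.assoc)

definition trunc2 :: "nat \<Rightarrow> bseries \<Rightarrow> bseries" where
  "trunc2 N F = Abs_fps (\<lambda>j. if j \<le> N then Abs_fps (\<lambda>i. if i \<le> N then F $ j $ i else 0) else 0)"

lemma mult_nth_agree:
  fixes A B C :: "complex fps"
  assumes "\<forall>i\<le>N. A $ i = B $ i" "k \<le> N"
  shows "(A * C) $ k = (B * C) $ k"
  unfolding fps_mult_nth by (rule sum.cong) (use assms in auto)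

lemma compose_agree:
  fixes a b :: "complex fps"
  assumes "0 < n" "\<forall>m\<le>N. a $ m = b $ m" "k \<le> N"
  shows "(a oo fps_X ^ n) $ k = (b oo fps_X ^ n) $ k"
proof -
  have "k div n \<le> N" using assms div_le_dividend le_trans by blast
  then show ?thesis using assms by (simp add: Xn_compose_nth)
qed

lemma subst_trunc:
  assumes "0 < n" "k \<le> N"
  shows "subst_curve n y (trunc2 N F) $ k = subst_curve n y F $ k"
  unfolding subst_nth fps_sum_nth
proof (rule sum.cong[OF refl])
  fix j assume j: "j \<in> {..k}"
  have "\<forall>i\<le>N. (trunc2 N F $ j oo fps_X ^ n) $ i = (F $ j oo fps_X ^ n) $ i"
    using j assms by (auto intro!: compose_agree simp: trunc2_def)
  then show "((trunc2 N F $ j oo fps_X ^ n) * y ^ j) $ k = ((F $ j oo fps_X ^ n) * y ^ j) $ k"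
    using assms by (intro mult_nth_agree) auto
qed

lemma pullback_trunc:
  assumes "0 < n" "k \<le> N"
  shows "pullback n y (trunc2 N (fst \<omega>), trunc2 N (snd \<omega>)) $ k = pullback n y \<omega> $ k"
proof -
  have a: "\<forall>i\<le>N. subst_curve n y (trunc2 N G) $ i = subst_curve n y G $ i" for G
    using assms subst_trunc by auto
  show ?thesis unfolding pullback_def fps_add_nth
    using mult_nth_agree[OF a assms(2)] by simp
qed

lemma holo_trunc: "holo_series (trunc2 N F)"
proof -
  define C where "C = (\<Sum>j\<le>N. \<Sum>i\<le>N. norm (F $ j $ i))"
  have "norm (trunc2 N F $ j $ i) \<le> C * 1 ^ (i + j)" for i j
  proof (cases "i \<le> N \<and> j \<le> N")
    case True
    have "norm (F $ j $ i) \<le> (\<Sum>i\<le>N. norm (F $ j $ i))"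
      by (rule member_le_sum) (use True in auto)
    also have "\<dots> \<le> C" unfolding C_def
      by (rule member_le_sum[where f="\<lambda>j. \<Sum>i\<le>N. norm (F $ j $ i)"]) (use True in \<open>auto intro: sum_nonneg\<close>)
    finally show ?thesis using True by (simp add: trunc2_def)
  next
    case False
    have "0 \<le> C" unfolding C_def by (intro sum_nonneg) auto
    then show ?thesis using False by (auto simp: trunc2_def)
  qed
  then show ?thesis unfolding holo_series_def by blast
qed

lemma nu_in_values:
  assumes "0 < n" "pullback n y \<omega> \<noteq> 0"
  shows "subdegree (pullback n y \<omega>) + 1 \<in> values_set n y"
proof -
  define d where "d = subdegree (pullback n y \<omega>)"
  define \<omega>' where "\<omega>' = (trunc2 d (fst \<omega>), trunc2 d (snd \<omega>))"
  have agree: "k \<le> d \<Longrightarrow> pullback n y \<omega>' $ k = pullback n y \<omega> $ k" for k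
    unfolding \<omega>'_def using pullback_trunc assms(1) by blast
  have nz: "pullback n y \<omega>' $ d \<noteq> 0" using agree[of d] assms(2) by (simp add: d_def)
  then have ne: "pullback n y \<omega>' \<noteq> 0" by auto
  have "subdegree (pullback n y \<omega>') = d"
    by (rule subdegreeI[OF nz]) (use agree d_def in \<open>auto intro: nth_less_subdegree_zero\<close>)
  then have "nu n y \<omega>' = enat (d + 1)" using ne by (simp add: nu_def)
  moreover have "holo_form \<omega>'" by (simp add: holo_form_def \<omega>'_def holo_trunc)
  ultimately show ?thesis unfolding values_set_def d_def by blast
qed

lemma coeffZ:
  fixes A h :: "complex fps"
  assumes "0 < n" "\<And>k. A $ k \<noteq> 0 \<Longrightarrow> d < n * k + subdegree h"
  shows "((A oo fps_X ^ n) * h) $ d = 0"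
  unfolding fps_mult_nth
proof (rule sum.neutral, intro ballI)
  fix i assume i: "i \<in> {0..d}"
  show "(A oo fps_X ^ n) $ i * h $ (d - i) = 0"
  proof (cases "n dvd i \<and> A $ (i div n) \<noteq> 0")
    case True
    then have "d < i + subdegree h" using assms(2)[of "i div n"] by simp
    then have "h $ (d - i) = 0" using i by (intro nth_less_subdegree_zero) auto
    then show ?thesis by simp
  next
    case False then show ?thesis using assms(1) by (auto simp: Xn_compose_nth)
  qed
qed

lemma coeffE:
  fixes A h :: "complex fps"
  assumes "0 < n" "\<And>k. A $ k \<noteq> 0 \<Longrightarrow> d \<le> n * k + subdegree h"
    and d: "d = n * k0 + subdegree h"
  shows "((A oo fps_X ^ n) * h) $ d = A $ k0 * h $ subdegree h"
proof -
  have "((A oo fps_X ^ n) * h) $ d = (\<Sum>i=0..d. if i = n * k0 then A $ k0 * h $ subdegree h else 0)"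
    unfolding fps_mult_nth
  proof (rule sum.cong[OF refl])
    fix i assume i: "i \<in> {0..d}"
    show "(A oo fps_X ^ n) $ i * h $ (d - i) = (if i = n * k0 then A $ k0 * h $ subdegree h else 0)"
    proof (cases "i = n * k0")
      case True then show ?thesis using assms by (simp add: Xn_compose_nth d)
    next
      case False
      show ?thesis
      proof (cases "n dvd i \<and> A $ (i div n) \<noteq> 0")
        case True
        then have i': "i = n * (i div n)" by simp
        have "d \<le> i + subdegree h" using assms(2)[of "i div n"] True by simp
        then have "n * k0 \<le> n * (i div n)" using d i' by linarith
        then have "k0 \<le> i div n" using assms(1) by simp
        then have "k0 < i div n" using False i' by (metis le_neq_implies_less)
        then have "n * k0 < i" using assms(1) i' by (metis mult_less_mono2)
        then have "h $ (d - i) = 0" using i d by (intro nth_less_subdegree_zero) auto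
        then show ?thesis using False by simp
      next
        case False then show ?thesis using assms(1) \<open>i \<noteq> n * k0\<close> by (auto simp: Xn_compose_nth)
      qed
    qed
  qed
  also have "\<dots> = A $ k0 * h $ subdegree h" by (simp add: sum.delta d)
  finally show ?thesis .
qed

primrec Glist :: "((nat \<Rightarrow> complex) \<Rightarrow> nat \<Rightarrow> complex) \<Rightarrow> nat \<Rightarrow> complex list" where
  "Glist st 0 = []"
| "Glist st (Suc v) = Glist st v @ [st (\<lambda>w. if w < v then Glist st v ! w else 0) v]"

definition Gfun :: "((nat \<Rightarrow> complex) \<Rightarrow> nat \<Rightarrow> complex) \<Rightarrow> nat \<Rightarrow> complex" where
  "Gfun st v = Glist st (Suc v) ! v"

lemma Glist_len: "length (Glist st v) = v"
  by (induction v) auto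

lemma Glist_nth: "w < v \<Longrightarrow> Glist st v ! w = Gfun st w"
proof (induction v)
  case 0 then show ?case by simp
next
  case (Suc v)
  show ?case
  proof (cases "w < v")
    case True then show ?thesis using Suc by (simp add: nth_append Glist_len)
  next
    case False then have "w = v" using Suc by simp
    then show ?thesis by (simp add: Gfun_def)
  qed
qed

lemma Gfun_eq: "Gfun st v = st (\<lambda>w. if w < v then Gfun st w else 0) v"
proof -
  have "Gfun st v = st (\<lambda>w. if w < v then Glist st v ! w else 0) v"
    by (simp add: Gfun_def nth_append Glist_len)
  also have "(\<lambda>w. if w < v then Glist st v ! w else 0) = (\<lambda>w. if w < v then Gfun st w else 0)"
    by (auto simp: Glist_nth)
  finally show ?thesis .
qed

theorem mainTheorem4:
  fixes n :: nat and y :: "complex fps" and \<Omega> :: "nat \<Rightarrow> form1"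
  assumes "puiseux_param n y"
    and "bij_betw (\<lambda>i. nu n y (\<Omega> i)) {..<n} (enat ` values_basis n y)"
  shows "(\<forall>\<omega>. \<exists>f \<eta>. \<eta> \<in> ideal_curve n y \<and> \<omega> = form_add (lin_comb n f \<Omega>) \<eta>) \<and>
         (\<forall>f. lin_comb n f \<Omega> \<in> ideal_curve n y \<longrightarrow> (\<forall>i<n. f i = 0))"
proof -
  have n0: "0 < n" using assms(1) by (simp add: puiseux_param_def)
  have y0: "y $ 0 = 0"
  proof -
    obtain \<beta>1 where "n < \<beta>1" "\<forall>\<beta><\<beta>1. y $ \<beta> = 0" using assms(1) by (auto simp: puiseux_param_def)
    then show ?thesis using n0 by auto
  qed
  define b where "b i = the_enat (nu n y (\<Omega> i))" for i
  define h where "h i = pullback n y (\<Omega> i)" for i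
  have bij: "bij_betw (\<lambda>i. nu n y (\<Omega> i)) {..<n} (enat ` values_basis n y)" by (rule assms(2))
  have bnu: "nu n y (\<Omega> i) = enat (b i)" and bbas: "b i \<in> values_basis n y" if "i < n" for i
  proof -
    have "nu n y (\<Omega> i) \<in> enat ` values_basis n y"
      using bij that by (auto dest: bij_betw_apply)
    then obtain m where m: "nu n y (\<Omega> i) = enat m" "m \<in> values_basis n y" by auto
    then show "nu n y (\<Omega> i) = enat (b i)" "b i \<in> values_basis n y" by (simp_all add: b_def)
  qed
  have hnz: "h i \<noteq> 0" and bsub: "b i = subdegree (h i) + 1" if "i < n" for i
    using bnu[OF that] by (auto simp: nu_def h_def split: if_splits)
  have binj: "i = j" if "i < n" "j < n" "b i = b j" for i j
  proof -
    have "enat (b i) = enat (b j)" using that by simp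
    then have "nu n y (\<Omega> i) = nu n y (\<Omega> j)" using bnu that by simp
    then show ?thesis using bij_betw_imp_inj_on[OF bij] that by (auto dest: inj_onD)
  qed
  have bmod: "i = j" if "i < n" "j < n" "b i mod n = b j mod n" for i j
  proof -
    have "b i \<le> b j" "b j \<le> b i"
      using bbas[OF that(1)] bbas[OF that(2)] that(3) unfolding values_basis_def by auto
    then show ?thesis using binj that by simp
  qed
  have VL: "\<exists>i<n. \<exists>k. subdegree (pullback n y \<omega>) + 1 = n * k + b i"
    if "pullback n y \<omega> \<noteq> 0" for \<omega>
  proof -
    define v where "v = subdegree (pullback n y \<omega>) + 1"
    have v: "v \<in> values_set n y" using nu_in_values[OF n0 that] by (simp add: v_def)
    define m where "m = (LEAST w. w \<in> values_set n y \<and> w mod n = v mod n)"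
    have m: "m \<in> values_set n y \<and> m mod n = v mod n"
      unfolding m_def by (rule LeastI[of _ v]) (use v in auto)
    have mle: "m \<le> w" if "w \<in> values_set n y" "w mod n = v mod n" for w
      unfolding m_def by (rule Least_le) (use that in auto)
    have "m \<in> values_basis n y" unfolding values_basis_def using m mle by auto
    then have "enat m \<in> (\<lambda>i. nu n y (\<Omega> i)) ` {..<n}"
      using bij_betw_imp_surj_on[OF bij] by auto
    then obtain i where i: "i < n" "nu n y (\<Omega> i) = enat m" by auto
    then have bi: "b i = m" using bnu by simp
    have "m \<le> v" using mle[OF v] by simp
    then have "n dvd v - m" using m mod_eq_dvd_iff_nat[OF \<open>m \<le> v\<close>, of n] by simp
    then obtain k where "v - m = n * k" by auto
    then have "v = n * k + b i" using \<open>m \<le> v\<close> bi by simp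
    then have "subdegree (pullback n y \<omega>) + 1 = n * k + b i" using v_def by simp
    then show ?thesis using i(1) by blast
  qed
  define lead where "lead i = h i $ subdegree (h i)" for i
  have leadnz: "lead i \<noteq> 0" if "i < n" for i using hnz[OF that] by (simp add: lead_def)
  have wmod: "(n * k + b i) mod n = b i mod n" for k i by simp
  show ?thesis
  proof (intro conjI allI impI)
    fix f i assume L: "lin_comb n f \<Omega> \<in> ideal_curve n y" and "i < n"
    have sum0: "(\<Sum>i<n. (f i oo fps_X ^ n) * h i) = 0"
      using L pullback_lin[OF n0 y0, of n f \<Omega>] by (simp add: ideal_curve_def h_def)
    show "f i = 0"
    proof (rule ccontr)
      assume fi: "f i \<noteq> 0"
      define I where "I = {i. i < n \<and> f i \<noteq> 0}"
      define w where "w i = n * subdegree (f i) + b i" for i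
      have I: "finite I" "I \<noteq> {}" using fi \<open>i < n\<close> by (auto simp: I_def)
      have "Min (w ` I) \<in> w ` I" using I by simp
      then obtain i0 where i0: "i0 \<in> I" "w i0 = Min (w ` I)" by auto
      have wmin: "w i0 \<le> w j" if "j \<in> I" for j using i0 I that by simp
      define d where "d = n * subdegree (f i0) + subdegree (h i0)"
      have i0n: "i0 < n" "f i0 \<noteq> 0" using i0 by (auto simp: I_def)
      have terms: "((f j oo fps_X ^ n) * h j) $ d = (if j = i0 then f i0 $ subdegree (f i0) * lead i0 else 0)"
        if "j < n" for j
      proof (cases "j = i0")
        case True
        have "((f i0 oo fps_X ^ n) * h i0) $ d = f i0 $ subdegree (f i0) * h i0 $ subdegree (h i0)"
          by (rule coeffE[OF n0 _ d_def]) (auto simp: d_def dest: subdegree_leI)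
        then show ?thesis unfolding True lead_def by simp
      next
        case False
        have "((f j oo fps_X ^ n) * h j) $ d = 0"
        proof (rule coeffZ[OF n0])
          fix k assume fk: "f j $ k \<noteq> 0"
          then have jI: "j \<in> I" using that by (auto simp: I_def)
          have "subdegree (f j) \<le> k" using fk by (rule subdegree_leI)
          have "w j \<noteq> w i0"
          proof
            assume "w j = w i0"
            then have "b j mod n = b i0 mod n" unfolding w_def by (metis wmod)
            then show False using bmod[OF that i0n(1)] False by simp
          qed
          then have "w i0 < w j" using wmin[OF jI] by simp
          moreover have "n * subdegree (f j) \<le> n * k" using \<open>subdegree (f j) \<le> k\<close> by simp
          ultimately show "d < n * k + subdegree (h j)"
            using bsub[OF that] bsub[OF i0n(1)] unfolding w_def d_def by linarith
        qed
        then show ?thesis using False by simp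
      qed
      have "0 = (\<Sum>j<n. (f j oo fps_X ^ n) * h j) $ d" using sum0 by simp
      also have "\<dots> = (\<Sum>j<n. if j = i0 then f i0 $ subdegree (f i0) * lead i0 else 0)"
        unfolding fps_sum_nth by (rule sum.cong) (auto simp: terms)
      also have "\<dots> = f i0 $ subdegree (f i0) * lead i0" using i0n by simp
      finally show False using i0n leadnz by simp
    qed
  next
    fix \<omega>
    define P where "P = pullback n y \<omega>"
    define FF where "FF H i = Abs_fps (\<lambda>k. H (n * k + b i))" for H :: "nat \<Rightarrow> complex" and i
    define LL where "LL H = (\<Sum>i<n. (FF H i oo fps_X ^ n) * h i)" for H
    define pair where "pair v i \<longleftrightarrow> i < n \<and> b i \<le> v \<and> n dvd (v - b i)" for v i
    define st where "st H v = (if \<exists>i. pair v i then (P - LL H) $ (v - 1) / lead (SOME i. pair v i) else 0)" for H v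
    define G where "G = Gfun st"
    define f where "f = FF G"
    define L where "L = lin_comb n f \<Omega>"
    define \<eta> where "\<eta> = (fst \<omega> - fst L, snd \<omega> - snd L)"
    have om: "\<omega> = form_add L \<eta>" by (simp add: form_add_def \<eta>_def)
    have pL: "pullback n y L = LL G"
      unfolding L_def LL_def f_def h_def by (rule pullback_lin[OF n0 y0])
    have pe: "pullback n y \<eta> = P - LL G"
      using arg_cong[OF om, of "pullback n y"] pL by (simp add: pullback_add P_def)
    have "pullback n y \<eta> = 0"
    proof (rule ccontr)
      assume D: "pullback n y \<eta> \<noteq> 0"
      define d where "d = subdegree (pullback n y \<eta>)"
      obtain i0 k0 where i0: "i0 < n" and v0: "d + 1 = n * k0 + b i0"
        using VL[OF D] d_def by blast
      define v where "v = d + 1"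
      have pv: "pair v i0" using i0 v0 by (simp add: pair_def v_def)
      have uniq: "i = i0" if "pair v i" for i
      proof -
        have "b i \<le> v" "n dvd v - b i" "i < n" using that by (auto simp: pair_def)
        then have "v mod n = b i mod n" using mod_eq_dvd_iff_nat[OF \<open>b i \<le> v\<close>, of n] by simp
        moreover have "v mod n = b i0 mod n" using v0 v_def wmod by metis
        ultimately show ?thesis using bmod[OF \<open>i < n\<close> i0] by simp
      qed
      have some: "(SOME i. pair v i) = i0" using pv uniq by (rule some_equality)
      define Gv where "Gv = (\<lambda>w. if w < v then G w else 0)"
      have "G v = st Gv v" unfolding G_def Gv_def by (rule Gfun_eq)
      also have "st Gv v = (P - LL Gv) $ (v - 1) / lead (SOME i. pair v i)"
        unfolding st_def using pv by auto
      finally have "G v = (P - LL Gv) $ (v - 1) / lead i0" unfolding some .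
      then have Gv_eq: "G v = (P - LL Gv) $ d / lead i0" by (simp add: v_def)
      have diffA: "(FF G i - FF Gv i) $ k = (if n * k + b i < v then 0 else G (n * k + b i))" for i k
        by (simp add: FF_def Gv_def)
      have LLdiff: "LL G - LL Gv = (\<Sum>i<n. ((FF G i - FF Gv i) oo fps_X ^ n) * h i)"
        by (simp add: LL_def sum_subtractf fps_compose_sub_distrib left_diff_distrib)
      have terms: "(((FF G j - FF Gv j) oo fps_X ^ n) * h j) $ d = (if j = i0 then G v * lead i0 else 0)"
        if "j < n" for j
      proof (cases "j = i0")
        case True
        have "(((FF G i0 - FF Gv i0) oo fps_X ^ n) * h i0) $ d
              = (FF G i0 - FF Gv i0) $ k0 * h i0 $ subdegree (h i0)"
        proof (rule coeffE[OF n0])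
          fix k assume "(FF G i0 - FF Gv i0) $ k \<noteq> 0"
          then have "v \<le> n * k + b i0" using diffA[of i0 k] by (auto split: if_splits)
          then show "d \<le> n * k + subdegree (h i0)" using bsub[OF i0] v_def by simp
        next
          show "d = n * k0 + subdegree (h i0)" using v0 bsub[OF i0] by simp
        qed
        moreover have "(FF G i0 - FF Gv i0) $ k0 = G v" using diffA[of i0 k0] v0 v_def by simp
        ultimately show ?thesis using True by (simp add: lead_def)
      next
        case False
        have "(((FF G j - FF Gv j) oo fps_X ^ n) * h j) $ d = 0"
        proof (rule coeffZ[OF n0])
          fix k assume "(FF G j - FF Gv j) $ k \<noteq> 0"
          then have le: "v \<le> n * k + b j" using diffA[of j k] by (auto split: if_splits)
          have "v \<noteq> n * k + b j"
          proof
            assume "v = n * k + b j"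
            then have "pair v j" using that by (simp add: pair_def)
            then show False using uniq False by simp
          qed
          then show "d < n * k + subdegree (h j)" using le bsub[OF that] v_def by simp
        qed
        then show ?thesis using False by simp
      qed
      have "(LL G - LL Gv) $ d = (\<Sum>j<n. if j = i0 then G v * lead i0 else 0)"
        unfolding LLdiff fps_sum_nth by (rule sum.cong) (auto simp: terms)
      also have "\<dots> = G v * lead i0" using i0 by simp
      finally have c1: "(LL G - LL Gv) $ d = G v * lead i0" .
      have "pullback n y \<eta> $ d = (P - LL Gv) $ d - (LL G - LL Gv) $ d"
        unfolding pe by simp
      also have "\<dots> = 0" using c1 Gv_eq leadnz[OF i0] by simp
      finally show False using D d_def by simp
    qed
    then have "\<eta> \<in> ideal_curve n y" by (simp add: ideal_curve_def)
    then show "\<exists>f \<eta>. \<eta> \<in> ideal_curve n y \<and> \<omega> = form_add (lin_comb n f \<Omega>) \<eta>"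
      using om L_def by blast
  qed
qed

end
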